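(* For every pacing function $\mu:\Theta\to\mathbb{R}_{\ge0}$ and every $(w,B)\in\Theta'$, the function $t\mapsto q^\mu(w,B,t)$ is differentiable on $(-1/2,\infty)$, with $\frac{\partial q^\mu(w,B,t)}{\partial t}=B-\mathbb{E}_{\alpha\sim F}\Big[\sigma^\mu_\alpha\Big(\frac{w^T\alpha}{1+t}\Big)H^\mu_\alpha\Big(\frac{w^T\alpha}{1+t}\Big)\mathbf 1\Big\{\frac{w^T\alpha}{1+t}\ge r(\alpha)\Big\}\Big].$
   Context: Setting. Fix integers $n\ge 2$ and $d\ge 2$, and constants $U>0$, $B_{\min}>0$. Buyer types are $(w,B)\in\Theta:=(0,U)^d\times(B_{\min},U)$; $\Theta_w:=(0,U)^d$. Item types are $\alpha\in A\subset\mathbb{R}^d_{+}$ (strictly positive orthant); all sets carry the Lebesgue $\sigma$-algebra. $F$ is a probability distribution on $A$ with a density and $G$ a probability distribution on $\Theta$ with a density. Buyer $(w,B)$ values item $\alpha$ at $w^T\alpha$; $\omega>0$ is a constant with $w^T\alpha\le\omega$ for all $w\in\Theta_w,\alpha\in A$. Reserve prices: measurable $r:A\to(0,\infty)$. A pacing function is a measurable $\mu:\Theta\to\mathbb{R}_{\ge0}$. For $\alpha\in A$, $\lambda^\mu_\alpha$ is the distribution of $w^T\alpha/(1+\mu(w,B))$ when $(w,B)\sim G$, and $H^\mu_\alpha$ the distribution of the maximum of $n-1$ i.i.d. draws from $\lambda^\mu_\alpha$; $H^\mu_\alpha(x):=\lambda^\mu_\alpha((-\infty,x])^{n-1}$.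 Define $\sigma^\mu_\alpha(x)=x$ if $x<r(\alpha)$; for $x\ge r(\alpha)$, $\sigma^\mu_\alpha(x)=x-\int_{r(\alpha)}^x \frac{H^\mu_\alpha(s)}{H^\mu_\alpha(x)}ds$ if $H^\mu_\alpha(x)>0$ and $\sigma^\mu_\alpha(x)=r(\alpha)$ if $H^\mu_\alpha(x)=0$. The dual function is $q^\mu(w,B,t):=(1+t)\,\mathbb{E}_{\alpha\sim F}\big[\mathbf 1\{\frac{w^T\alpha}{1+t}\ge r(\alpha)\}\int_{r(\alpha)}^{w^T\alpha/(1+t)}H^\mu_\alpha(s)\,ds\big]+tB$, for $t>-1$. Let $K_w$ be the distribution of $w^T\alpha/r(\alpha)$ when $\alpha\sim F$, and $\Theta':=\{(w,B)\in\Theta: K_w\text{ has a continuous CDF}\}$. *)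

theory Defs
  imports "HOL-Probability.Probability"
begin

definition Theta :: "real \<Rightarrow> real \<Rightarrow> ((real^'d) \<times> real) set" where
  "Theta U Bmin = {(w, B). (\<forall>i. 0 < w $ i \<and> w $ i < U) \<and> Bmin < B \<and> B < U}"

text \<open>CDF of lambda^mu_alpha: distribution of w.alpha/(1+mu(w,B)) for (w,B) ~ G
  (G is concentrated on Theta).\<close>
definition lam_cdf ::
  "((real^'d) \<times> real) measure \<Rightarrow> real \<Rightarrow> real \<Rightarrow> ((real^'d) \<times> real \<Rightarrow> real)
    \<Rightarrow> real^'d \<Rightarrow> real \<Rightarrow> real" where
  "lam_cdf G U Bmin \<mu> \<alpha> x =
     measure G {\<theta> \<in> Theta U Bmin. (fst \<theta> \<bullet> \<alpha>) / (1 + \<mu> \<theta>) \<le> x}"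

definition Hfun ::
  "nat \<Rightarrow> ((real^'d) \<times> real) measure \<Rightarrow> real \<Rightarrow> real \<Rightarrow> ((real^'d) \<times> real \<Rightarrow> real)
    \<Rightarrow> real^'d \<Rightarrow> real \<Rightarrow> real" where
  "Hfun n G U Bmin \<mu> \<alpha> x = (lam_cdf G U Bmin \<mu> \<alpha> x) ^ (n - 1)"

definition sigma_fun ::
  "nat \<Rightarrow> ((real^'d) \<times> real) measure \<Rightarrow> real \<Rightarrow> real \<Rightarrow> ((real^'d) \<times> real \<Rightarrow> real)
    \<Rightarrow> (real^'d \<Rightarrow> real) \<Rightarrow> real^'d \<Rightarrow> real \<Rightarrow> real" where
  "sigma_fun n G U Bmin \<mu> r \<alpha> x =
     (if x < r \<alpha> then x
      else if Hfun n G U Bmin \<mu> \<alpha> x > 0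
        then x - (\<integral>s\<in>{r \<alpha>..x}. Hfun n G U Bmin \<mu> \<alpha> s / Hfun n G U Bmin \<mu> \<alpha> x \<partial>lborel)
        else r \<alpha>)"

text \<open>Dual function q^mu(w,B,t); the expectation over alpha ~ F is taken over A
  (F is concentrated on A).\<close>
definition q_fun ::
  "nat \<Rightarrow> (real^'d) measure \<Rightarrow> (real^'d) set \<Rightarrow> ((real^'d) \<times> real) measure \<Rightarrow> real \<Rightarrow> real
    \<Rightarrow> ((real^'d) \<times> real \<Rightarrow> real) \<Rightarrow> (real^'d \<Rightarrow> real) \<Rightarrow> real^'d \<Rightarrow> real \<Rightarrow> real \<Rightarrow> real" where
  "q_fun n F A G U Bmin \<mu> r w B t =
     (1 + t) * (\<integral>\<alpha>\<in>A.
        (if (w \<bullet> \<alpha>) / (1 + t) \<ge> r \<alpha> then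
           (\<integral>s\<in>{r \<alpha>..(w \<bullet> \<alpha>) / (1 + t)}. Hfun n G U Bmin \<mu> \<alpha> s \<partial>lborel)
         else 0) \<partial>F)
     + t * B"

definition K_cdf :: "(real^'d) measure \<Rightarrow> (real^'d) set \<Rightarrow> (real^'d \<Rightarrow> real) \<Rightarrow> real^'d \<Rightarrow> real \<Rightarrow> real" where
  "K_cdf F A r w x = measure F {\<alpha> \<in> A. (w \<bullet> \<alpha>) / r \<alpha> \<le> x}"

definition Theta' ::
  "(real^'d) measure \<Rightarrow> (real^'d) set \<Rightarrow> (real^'d \<Rightarrow> real) \<Rightarrow> real \<Rightarrow> real \<Rightarrow> ((real^'d) \<times> real) set" where
  "Theta' F A r U Bmin = {(w, B) \<in> Theta U Bmin. continuous_on UNIV (K_cdf F A r w)}"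

end

theory Submission
  imports Defs
begin

lemma gi_lip:
  fixes f :: "real \<Rightarrow> real"
  assumes f0: "\<And>x. 0 \<le> f x" and f1: "\<And>x. f x \<le> 1" and m: "mono f"
  shows "\<bar>integral {a..y1} f - integral {a..y2} f\<bar> \<le> \<bar>y1 - y2\<bar>"
proof -
  have int: "f integrable_on {u..v}" for u v
    using m by (intro integrable_on_mono_on) (auto simp: mono_on_def mono_def)
  have key: "\<bar>integral {a..y1} f - integral {a..y2} f\<bar> \<le> y2 - y1" if "y1 \<le> y2" for y1 y2
  proof (cases "y2 \<le> a")
    case True
    have z: "integral {a..y} f = 0" if "y \<le> a" for y
      using that by (cases "y < a") auto
    then have "integral {a..y1} f = 0" "integral {a..y2} f = 0"
      using that True by auto
    then show ?thesis using that by simp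
  next
    case False
    have bnd: "0 \<le> integral {u..v} f \<and> integral {u..v} f \<le> v - u" if "u \<le> v" for u v
    proof
      show "0 \<le> integral {u..v} f" using int f0 by (simp add: integral_nonneg)
      have "integral {u..v} f \<le> integral {u..v} (\<lambda>_. 1::real)"
        using int f1 by (intro integral_le) auto
      then show "integral {u..v} f \<le> v - u" using that by simp
    qed
    show ?thesis
    proof (cases "y1 \<le> a")
      case True
      then have "integral {a..y1} f = 0" by (cases "y1 < a"; auto)
      then show ?thesis using bnd[of a y2] False True by auto
    next
      case False
      have "integral {a..y1} f + integral {y1..y2} f = integral {a..y2} f"
        by (rule Henstock_Kurzweil_Integration.integral_combine) (use that int False in auto)
      then show ?thesis using bnd[of y1 y2] that by auto
    qed
  qed
  show ?thesis using key[of y1 y2] key[of y2 y1] by (cases "y1 \<le> y2") auto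
qed

lemma gi_bound:
  fixes f :: "real \<Rightarrow> real"
  assumes f0: "\<And>x. 0 \<le> f x" and f1: "\<And>x. f x \<le> 1" and m: "mono f" and a: "0 \<le> a"
  shows "\<bar>integral {a..y} f\<bar> \<le> \<bar>y\<bar>"
proof (cases "y < a")
  case True then show ?thesis by simp
next
  case False
  have "\<bar>integral {a..y} f - integral {a..a} f\<bar> \<le> \<bar>y - a\<bar>" by (rule gi_lip[OF assms(1-3)])
  then show ?thesis using False a by simp
qed

lemma gi_deriv_pos:
  fixes f :: "real \<Rightarrow> real"
  assumes m: "mono f" and ax: "a < x" and c: "isCont f x"
  shows "((\<lambda>y. integral {a..y} f) has_real_derivative f x) (at x)"
proof -
  have int: "f integrable_on {a..x+1}"
    using m by (intro integrable_on_mono_on) (auto simp: mono_on_def mono_def)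
  have "((\<lambda>y. integral {a..y} f) has_vector_derivative f x) (at x within ({a..x+1} - {}))"
    using ax c int by (intro integral_has_vector_derivative_continuous_at)
       (auto intro: continuous_at_imp_continuous_at_within)
  then show ?thesis using ax
    by (simp add: has_real_derivative_iff_has_vector_derivative at_within_Icc_at)
qed

lemma gi_deriv_neg:
  fixes f :: "real \<Rightarrow> real"
  assumes xa: "x < a"
  shows "((\<lambda>y. integral {a..y} f) has_real_derivative 0) (at x)"
proof -
  have "((\<lambda>y. 0::real) has_real_derivative 0) (at x)" by simp
  then show ?thesis
    by (rule has_field_derivative_transform_within_open[where S="{..<a}"]) (use xa in auto)
qed



lemma psi_deriv:
  fixes f :: "real \<Rightarrow> real"
  assumes m: "mono f" and c: "0 < c" and t: "0 < 1 + t"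
    and cond: "c/(1+t) < a \<or> (a < c/(1+t) \<and> isCont f (c/(1+t)))"
  shows "((\<lambda>s. (1+s) * integral {a..c/(1+s)} f) has_real_derivative
     (if c/(1+t) \<ge> a then integral {a..c/(1+t)} f - c/(1+t) * f (c/(1+t)) else 0)) (at t)"
proof -
  define x where "x = c/(1+t)"
  define g where "g = (\<lambda>y. integral {a..y} f)"
  define g' where "g' = (if x \<ge> a then f x else 0)"
  have gd: "(g has_real_derivative g') (at x)"
  proof (cases "x < a")
    case True then show ?thesis unfolding g_def g'_def using gi_deriv_neg[OF True] by simp
  next
    case False then show ?thesis unfolding g_def g'_def using cond gi_deriv_pos[OF m, of a x]
      by (auto simp: x_def)
  qed
  have d1: "((\<lambda>s. c/(1+s)) has_real_derivative (-c/(1+t)^2)) (at t)"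
    using t by (auto intro!: derivative_eq_intros simp: power2_eq_square)
  have d2: "((\<lambda>s. g (c/(1+s))) has_real_derivative g' * (-c/(1+t)^2)) (at t)"
    using DERIV_chain2[OF gd[unfolded x_def] d1] by (simp add: x_def)
  have d0: "((\<lambda>s. 1+s) has_real_derivative 1) (at t)"
    by (auto intro!: derivative_eq_intros)
  have d3: "((\<lambda>s. (1+s) * g (c/(1+s))) has_real_derivative 1 * g (c/(1+t)) + (g' * (-c/(1+t)^2)) * (1+t)) (at t)"
    using DERIV_mult[OF d0 d2] by simp
  have eq: "1 * g (c/(1+t)) + (g' * (-c/(1+t)^2)) * (1+t) =
     (if c/(1+t) \<ge> a then integral {a..c/(1+t)} f - c/(1+t) * f (c/(1+t)) else 0)"
  proof (cases "x \<ge> a")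
    case True
    have h: "(-c/(1+t)^2)*(1+t) = -(c/(1+t))" using t by (simp add: power2_eq_square)
    have "1 * g (c/(1+t)) + (g' * (-c/(1+t)^2)) * (1+t) = g x + g' * ((-c/(1+t)^2)*(1+t))"
      by (simp add: x_def)
    also have "\<dots> = g x - x * g'" unfolding h x_def by simp
    finally show ?thesis using True unfolding g_def g'_def x_def by simp
  next
    case False
    then have "g x = 0" unfolding g_def by simp
    then show ?thesis using False unfolding g'_def x_def by simp
  qed
  show ?thesis using d3[unfolded eq] unfolding g_def .
qed

lemma psi_lip:
  fixes f :: "real \<Rightarrow> real"
  assumes f0: "\<And>x. 0 \<le> f x" and f1: "\<And>x. f x \<le> 1" and m: "mono f" and a: "0 \<le> a"
    and c: "0 < c" and s1: "-1/2 < s1" and s2: "-1/2 < s2"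
  shows "\<bar>(1+s1) * integral {a..c/(1+s1)} f - (1+s2) * integral {a..c/(1+s2)} f\<bar> \<le> 4*c*\<bar>s1 - s2\<bar>"
proof -
  define u1 where "u1 = 1 + s1"
  define u2 where "u2 = 1 + s2"
  define g1 where "g1 = integral {a..c/u1} f"
  define g2 where "g2 = integral {a..c/u2} f"
  have u1: "u1 > 1/2" and u2: "u2 > 1/2" using s1 s2 by (auto simp: u1_def u2_def)
  have "\<bar>g1\<bar> \<le> \<bar>c/u1\<bar>" unfolding g1_def by (rule gi_bound[OF f0 f1 m a])
  also have "\<dots> \<le> 2*c" using u1 c by (simp add: field_simps)
  finally have b1: "\<bar>g1\<bar> \<le> 2*c" .
  have "\<bar>g1 - g2\<bar> \<le> \<bar>c/u1 - c/u2\<bar>" unfolding g1_def g2_def by (rule gi_lip[OF f0 f1 m])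
  also have "c/u1 - c/u2 = c*(u2-u1)/(u1*u2)" using u1 u2 by (simp add: field_simps)
  finally have "u2 * \<bar>g1 - g2\<bar> \<le> u2 * \<bar>c*(u2-u1)/(u1*u2)\<bar>" using u2 by (intro mult_left_mono) auto
  also have "\<dots> = u2 * (c*\<bar>u2-u1\<bar>/(u1*u2))" using u1 u2 c by (simp add: abs_mult)
  also have "\<dots> = c*\<bar>u2-u1\<bar>/u1" using u1 u2 c by (simp add: field_simps)
  also have "\<dots> \<le> c*\<bar>u2-u1\<bar>/(1/2)" using u1 c by (intro divide_left_mono) auto
  also have "\<dots> = 2*c*\<bar>u2-u1\<bar>" by simp
  finally have b2: "u2 * \<bar>g1 - g2\<bar> \<le> 2*c*\<bar>u2-u1\<bar>" .
  have "u1*g1 - u2*g2 = (u1-u2)*g1 + u2*(g1-g2)" by (simp add: algebra_simps)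
  then have "\<bar>u1*g1 - u2*g2\<bar> \<le> \<bar>u1-u2\<bar>*\<bar>g1\<bar> + u2*\<bar>g1-g2\<bar>" using u2 by (simp add: abs_mult abs_triangle_ineq[THEN order_trans])
  also have "\<dots> \<le> \<bar>u1-u2\<bar>*(2*c) + 2*c*\<bar>u2-u1\<bar>" using b1 b2 by (intro add_mono mult_left_mono) auto
  also have "\<dots> = 4*c*\<bar>s1-s2\<bar>" by (simp add: u1_def u2_def abs_minus_commute)
  finally show ?thesis by (simp add: u1_def u2_def g1_def g2_def)
qed



locale setting =
  fixes n :: nat and U Bmin \<omega> :: real
    and A :: "(real^'d) set" and F :: "(real^'d) measure" and fF :: "real^'d \<Rightarrow> ennreal"
    and G :: "((real^'d) \<times> real) measure" and gG :: "(real^'d) \<times> real \<Rightarrow> ennreal"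
    and r :: "real^'d \<Rightarrow> real" and \<mu> :: "(real^'d) \<times> real \<Rightarrow> real"
    and w :: "real^'d" and B t :: real
  assumes n: "n \<ge> 2" and d: "CARD('d) \<ge> 2"
    and U: "U > 0" and Bmin: "Bmin > 0"
    and A_meas: "A \<in> sets lebesgue"
    and A_pos: "\<forall>\<alpha>\<in>A. \<forall>i. \<alpha> $ i > 0"
    and F_dens: "fF \<in> borel_measurable lebesgue" "F = density lebesgue fF"
    and F_prob: "prob_space F" and F_on_A: "AE \<alpha> in F. \<alpha> \<in> A"
    and G_dens: "gG \<in> borel_measurable lebesgue" "G = density lebesgue gG"
    and G_prob: "prob_space G" and G_on_Theta: "AE \<theta> in G. \<theta> \<in> Theta U Bmin"
    and \<omega>: "\<omega> > 0" "\<forall>w'\<in>{w'. \<forall>i. 0 < w' $ i \<and> w' $ i < U}. \<forall>\<alpha>\<in>A. w' \<bullet> \<alpha> \<le> \<omega>"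
    and r_meas: "r \<in> borel_measurable (restrict_space lebesgue A)"
    and r_pos: "\<forall>\<alpha>\<in>A. r \<alpha> > 0"
    and \<mu>_meas: "\<mu> \<in> borel_measurable (restrict_space lebesgue (Theta U Bmin))"
    and \<mu>_nonneg: "\<forall>\<theta>\<in>Theta U Bmin. \<mu> \<theta> \<ge> 0"
    and wB: "(w, B) \<in> Theta' F A r U Bmin"
    and t: "t > -1/2"
begin

abbreviation "\<Theta> \<equiv> (Theta U Bmin :: ((real^'d) \<times> real) set)"
definition "\<mu>' \<theta> = (if \<theta> \<in> \<Theta> then \<mu> \<theta> else 0)"
definition "r' \<alpha> = (if \<alpha> \<in> A then r \<alpha> else 1)"

lemma Theta_eq: "\<Theta> = box (vec 0) (vec U) \<times> {Bmin<..<U}"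
  by (auto simp: Theta_def mem_box_cart)

lemma Theta_open: "open \<Theta>"
  unfolding Theta_eq by (intro open_Times) auto

lemma sets_F: "sets F = sets lebesgue" using F_dens by simp
lemma sets_G: "sets G = sets lebesgue" using G_dens by simp
lemma space_F[simp]: "space F = UNIV" using F_dens by simp
lemma space_G[simp]: "space G = UNIV" using G_dens by simp

lemma borelF: "f \<in> borel_measurable borel \<Longrightarrow> f \<in> borel_measurable F"
  by (subst measurable_cong_sets[OF sets_F refl]) (auto intro: measurable_completion)
lemma borelG: "f \<in> borel_measurable borel \<Longrightarrow> f \<in> borel_measurable G"
  by (subst measurable_cong_sets[OF sets_G refl]) (auto intro: measurable_completion)

lemma Theta_sets[measurable]: "\<Theta> \<in> sets G"
  unfolding sets_G using Theta_open by (intro sets_completionI_sets) (simp add: borel_open)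

lemma A_sets[measurable]: "A \<in> sets F"
  unfolding sets_F by (rule A_meas)

lemma mu'_meas[measurable]: "\<mu>' \<in> borel_measurable G"
proof -
  have "\<Theta> \<inter> space lebesgue \<in> sets lebesgue" using Theta_sets sets_G by simp
  then have "(\<lambda>x. if x \<in> \<Theta> then \<mu> x else 0) \<in> borel_measurable lebesgue"
    using \<mu>_meas measurable_restrict_space_iff[of \<Theta> lebesgue 0 borel \<mu>] by simp
  then show ?thesis unfolding \<mu>'_def[abs_def] by (subst measurable_cong_sets[OF sets_G refl])
qed

lemma r'_meas[measurable]: "r' \<in> borel_measurable F"
proof -
  have "A \<inter> space lebesgue \<in> sets lebesgue" using A_meas by simp
  then have "(\<lambda>x. if x \<in> A then r x else 1) \<in> borel_measurable lebesgue"
    using r_meas measurable_restrict_space_iff[of A lebesgue 1 borel r] by simp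
  then show ?thesis unfolding r'_def[abs_def] by (subst measurable_cong_sets[OF sets_F refl])
qed

lemma idF[measurable]: "(\<lambda>\<alpha>. \<alpha>) \<in> borel_measurable F"
  by (rule borelF) simp

lemma fstG[measurable]: "(\<lambda>\<theta>. fst \<theta>) \<in> borel_measurable G"
  by (rule borelG) (intro borel_measurable_continuous_onI continuous_intros)

lemma wF[measurable]: "(\<lambda>\<alpha>. w \<bullet> \<alpha>) \<in> borel_measurable F"
  by (rule borelF) simp

sublocale F: prob_space F by (rule F_prob)
sublocale G: prob_space G by (rule G_prob)
sublocale FL: pair_sigma_finite F lborel ..
sublocale GF: pair_sigma_finite G F ..

definition "Qset = {z \<in> space ((F \<Otimes>\<^sub>M lborel) \<Otimes>\<^sub>M G). snd z \<in> \<Theta> \<and>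
   fst (snd z) \<bullet> fst (fst z) \<le> snd (fst z) * (1 + \<mu>' (snd z))}"

lemma Qset_sets: "Qset \<in> sets ((F \<Otimes>\<^sub>M lborel) \<Otimes>\<^sub>M G)"
  unfolding Qset_def by measurable

abbreviation "L \<equiv> lam_cdf G U Bmin \<mu>"
abbreviation "H \<equiv> Hfun n G U Bmin \<mu>"

lemma Pair_Qset: "Pair (\<alpha>, u) -` Qset = {\<theta> \<in> \<Theta>. (fst \<theta> \<bullet> \<alpha>) / (1 + \<mu> \<theta>) \<le> u}"
proof -
  have "1 + \<mu> \<theta> > 0" if "\<theta> \<in> \<Theta>" for \<theta> using \<mu>_nonneg that by fastforce
  then show ?thesis unfolding Qset_def
    by (auto simp: space_pair_measure \<mu>'_def pos_divide_le_eq mult.commute)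
qed

lemma L_eq: "L \<alpha> u = measure G (Pair (\<alpha>, u) -` Qset)"
  unfolding lam_cdf_def Pair_Qset ..

lemma L_sets: "{\<theta> \<in> \<Theta>. (fst \<theta> \<bullet> \<alpha>) / (1 + \<mu> \<theta>) \<le> u} \<in> sets G"
  unfolding Pair_Qset[symmetric] using Qset_sets by (rule sets_Pair1)

lemma Lm: "(\<lambda>z. L (fst z) (snd z)) \<in> borel_measurable (F \<Otimes>\<^sub>M lborel)"
proof -
  have "(\<lambda>x. emeasure G (Pair x -` Qset)) \<in> borel_measurable (F \<Otimes>\<^sub>M lborel)"
    by (rule G.measurable_emeasure_Pair[OF Qset_sets])
  then have "(\<lambda>x. enn2real (emeasure G (Pair x -` Qset))) \<in> borel_measurable (F \<Otimes>\<^sub>M lborel)"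
    by measurable
  then show ?thesis by (simp add: L_eq measure_def)
qed

lemma Hm[measurable]: "(\<lambda>z. H (fst z) (snd z)) \<in> borel_measurable (F \<Otimes>\<^sub>M lborel)"
  unfolding Hfun_def using Lm by measurable

lemma L_mono: "mono (L \<alpha>)"
  unfolding mono_def lam_cdf_def
  by (intro allI impI G.finite_measure_mono L_sets) auto

lemma L_nonneg: "0 \<le> L \<alpha> u" unfolding lam_cdf_def by simp
lemma L_le1: "L \<alpha> u \<le> 1" unfolding lam_cdf_def by simp

lemma H_mono: "mono (H \<alpha>)"
  unfolding mono_def Hfun_def using L_mono L_nonneg by (auto intro: power_mono simp: mono_def)
lemma H_nonneg: "0 \<le> H \<alpha> u" unfolding Hfun_def using L_nonneg by simp
lemma H_le1: "H \<alpha> u \<le> 1" unfolding Hfun_def using L_nonneg L_le1 by (simp add: power_le_one)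

lemma H_set_integrable: "set_integrable lborel {a..b} (H \<alpha>)"
  unfolding set_integrable_def
  using H_nonneg H_le1 by (intro integrableI_bounded_set_indicator[where B=1])
    (auto simp: borel_measurable_mono[OF H_mono] emeasure_lborel_Icc_eq)

definition "J \<alpha> y = (\<integral>u. (if r' \<alpha> \<le> u \<and> u \<le> y then H \<alpha> u else 0) \<partial>lborel)"

lemma gi_eq_J: "integral {a..y} (H \<alpha>) = (\<integral>u. (if a \<le> u \<and> u \<le> y then H \<alpha> u else 0) \<partial>lborel)"
proof -
  have "integral {a..y} (H \<alpha>) = (LINT u:{a..y}|lborel. H \<alpha> u)"
    using set_borel_integral_eq_integral(2)[OF H_set_integrable] by simp
  also have "\<dots> = (\<integral>u. (if a \<le> u \<and> u \<le> y then H \<alpha> u else 0) \<partial>lborel)"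
    unfolding set_lebesgue_integral_def by (intro Bochner_Integration.integral_cong) (auto simp: indicator_def)
  finally show ?thesis .
qed

lemma J_meas: "(\<lambda>\<alpha>. J \<alpha> (w \<bullet> \<alpha> / (1 + s))) \<in> borel_measurable F"
  unfolding J_def by measurable

end


lemma AE_not_in_measure0:
  assumes "finite_measure M" "S \<in> sets M" "measure M S = 0"
  shows "AE x in M. x \<notin> S"
proof -
  have "emeasure M S = 0" using assms by (simp add: finite_measure.emeasure_eq_measure)
  then show ?thesis using assms by (intro AE_not_in null_setsI) simp_all
qed

lemma cdf_link:
  assumes M: "prob_space M" and f: "f \<in> borel_measurable M" and S: "S \<in> sets M"
    and AES: "AE x in M. x \<in> S"
  shows "(\<lambda>y. measure M {x \<in> S. f x \<le> y}) = cdf (distr M borel f)"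
    and "measure (distr M borel f) {c} = measure M {x \<in> S. f x = c}"
    and "real_distribution (distr M borel f)"
proof -
  interpret prob_space M by (rule M)
  show "real_distribution (distr M borel f)" using f by simp
  show "(\<lambda>y. measure M {x \<in> S. f x \<le> y}) = cdf (distr M borel f)"
  proof
    fix y
    have "cdf (distr M borel f) y = measure M (f -` {..y} \<inter> space M)"
      unfolding cdf_def using f by (simp add: measure_distr)
    also have "\<dots> = measure M {x \<in> S. f x \<le> y}"
      using AES f S by (intro measure_eq_AE) auto
    finally show "measure M {x \<in> S. f x \<le> y} = cdf (distr M borel f) y" ..
  qed
  have "measure (distr M borel f) {c} = measure M (f -` {c} \<inter> space M)"
    using f by (simp add: measure_distr)
  also have "\<dots> = measure M {x \<in> S. f x = c}"
    using AES f S by (intro measure_eq_AE) auto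
  finally show "measure (distr M borel f) {c} = measure M {x \<in> S. f x = c}" .
qed

lemma cdf_cont_iff:
  fixes f :: "'a \<Rightarrow> real"
  assumes M: "prob_space M" and f: "f \<in> borel_measurable M" and S: "S \<in> sets M"
    and AES: "AE x in M. x \<in> S"
  shows "isCont (\<lambda>y. measure M {x \<in> S. f x \<le> y}) c \<longleftrightarrow> measure M {x \<in> S. f x = c} = 0"
proof -
  interpret real_distribution "distr M borel f" using cdf_link(3)[OF assms] .
  show ?thesis unfolding cdf_link(1)[OF assms] cdf_link(2)[OF assms, symmetric]
    using finite_borel_measure.isCont_cdf[OF finite_borel_measure_M] .
qed

context setting begin

lemma w_in: "\<forall>i. 0 < w $ i \<and> w $ i < U"
  using wB by (auto simp: Theta'_def Theta_def)

lemma K_cont: "continuous_on UNIV (K_cdf F A r w)"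
  using wB by (auto simp: Theta'_def)

lemma w_pos: "\<alpha> \<in> A \<Longrightarrow> 0 < w \<bullet> \<alpha>"
  unfolding inner_vec_def using w_in A_pos by (intro sum_pos) auto

lemma w_le: "\<alpha> \<in> A \<Longrightarrow> w \<bullet> \<alpha> \<le> \<omega>"
  using \<omega>(2) w_in by auto

lemma AE_not_kink: "AE \<alpha> in F. \<alpha> \<in> A \<longrightarrow> w \<bullet> \<alpha> / r \<alpha> \<noteq> 1 + t"
proof -
  define k where "k \<alpha> = w \<bullet> \<alpha> / r' \<alpha>" for \<alpha>
  have km: "k \<in> borel_measurable F" unfolding k_def by measurable
  have eqK: "K_cdf F A r w = (\<lambda>y. measure F {\<alpha> \<in> A. k \<alpha> \<le> y})"
    unfolding K_cdf_def k_def r'_def by (intro ext arg_cong[where f="measure F"]) auto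
  have "isCont (\<lambda>y. measure F {\<alpha> \<in> A. k \<alpha> \<le> y}) (1 + t)"
    using K_cont unfolding eqK by (simp add: continuous_on_eq_continuous_at)
  then have "measure F {\<alpha> \<in> A. k \<alpha> = 1 + t} = 0"
    using cdf_cont_iff[OF F_prob km A_sets F_on_A] by simp
  moreover have "{\<alpha> \<in> A. k \<alpha> = 1 + t} \<in> sets F" using km by measurable
  ultimately have "AE \<alpha> in F. \<alpha> \<notin> {\<alpha> \<in> A. k \<alpha> = 1 + t}"
    by (intro AE_not_in_measure0) (auto simp: F.finite_measure_axioms)
  then show ?thesis by eventually_elim (auto simp: k_def r'_def)
qed

lemma N0_null: "{\<theta> :: (real^'d) \<times> real. \<exists>c. fst \<theta> = c *\<^sub>R w} \<in> null_sets lebesgue"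
proof -
  let ?W = "{(w, 0::real), (0, 1)} :: ((real^'d) \<times> real) set"
  have sub: "{\<theta> :: (real^'d) \<times> real. \<exists>c. fst \<theta> = c *\<^sub>R w} \<subseteq> span ?W"
  proof
    fix \<theta> :: "(real^'d) \<times> real" assume "\<theta> \<in> {\<theta>. \<exists>c. fst \<theta> = c *\<^sub>R w}"
    then obtain c where c: "fst \<theta> = c *\<^sub>R w" by auto
    have "\<theta> = c *\<^sub>R (w, 0) + snd \<theta> *\<^sub>R (0, 1)"
      using c by (cases \<theta>) auto
    also have "\<dots> \<in> span ?W"
      by (intro span_add span_mul span_base) auto
    finally show "\<theta> \<in> span ?W" .
  qed
  have "card ?W \<le> 2" by (simp add: card_insert_if)
  then have "dim {\<theta> :: (real^'d) \<times> real. \<exists>c. fst \<theta> = c *\<^sub>R w} \<le> 2"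
    using dim_le_card[OF sub] by simp
  also have "2 < DIM((real^'d) \<times> real)" using d by simp
  finally have "negligible {\<theta> :: (real^'d) \<times> real. \<exists>c. fst \<theta> = c *\<^sub>R w}"
    by (intro negligible_lowdim)
  then show ?thesis by (simp add: negligible_iff_null_sets)
qed

definition "P \<theta> \<alpha> \<longleftrightarrow> (\<theta> \<in> \<Theta> \<longrightarrow> \<alpha> \<in> A \<longrightarrow> ((1+t) *\<^sub>R fst \<theta> - (1 + \<mu>' \<theta>) *\<^sub>R w) \<bullet> \<alpha> \<noteq> 0)"

lemma AE_P1: "AE \<theta> in G. AE \<alpha> in F. P \<theta> \<alpha>"
proof -
  have "AE \<theta> in lebesgue. \<theta> \<notin> {\<theta> :: (real^'d) \<times> real. \<exists>c. fst \<theta> = c *\<^sub>R w}"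
    by (rule AE_not_in[OF N0_null])
  then have "AE \<theta> in G. \<theta> \<notin> {\<theta> :: (real^'d) \<times> real. \<exists>c. fst \<theta> = c *\<^sub>R w}"
    unfolding G_dens(2) using G_dens(1) by (subst AE_density) (auto elim: eventually_mono)
  then show ?thesis
  proof (rule eventually_mono)
    fix \<theta> :: "(real^'d) \<times> real" assume th: "\<theta> \<notin> {\<theta>. \<exists>c. fst \<theta> = c *\<^sub>R w}"
    define v where "v = (1+t) *\<^sub>R fst \<theta> - (1 + \<mu>' \<theta>) *\<^sub>R w"
    have "v \<noteq> 0"
    proof
      assume "v = 0"
      then have e: "(1+t) *\<^sub>R fst \<theta> = (1 + \<mu>' \<theta>) *\<^sub>R w" unfolding v_def by simp
      have "fst \<theta> = inverse (1+t) *\<^sub>R ((1+t) *\<^sub>R fst \<theta>)" using t by simp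
      also have "\<dots> = inverse (1+t) *\<^sub>R ((1 + \<mu>' \<theta>) *\<^sub>R w)" by (simp only: e)
      also have "\<dots> = ((1 + \<mu>' \<theta>)/(1+t)) *\<^sub>R w" by (simp add: divide_inverse mult.commute)
      finally have "fst \<theta> = ((1 + \<mu>' \<theta>)/(1+t)) *\<^sub>R w" .
      then show False using th by auto
    qed
    then have "negligible {\<alpha>. v \<bullet> \<alpha> = 0}" by (intro negligible_hyperplane) simp
    then have "AE \<alpha> in lebesgue. \<alpha> \<notin> {\<alpha>. v \<bullet> \<alpha> = 0}"
      by (intro AE_not_in) (simp add: negligible_iff_null_sets)
    then have "AE \<alpha> in F. \<alpha> \<notin> {\<alpha>. v \<bullet> \<alpha> = 0}"
      unfolding F_dens(2) using F_dens(1) by (subst AE_density) (auto elim: eventually_mono)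
    then show "AE \<alpha> in F. P \<theta> \<alpha>" by (rule eventually_mono) (auto simp: P_def v_def)
  qed
qed

lemma P_sets: "{x \<in> space (G \<Otimes>\<^sub>M F). P (fst x) (snd x)} \<in> sets (G \<Otimes>\<^sub>M F)"
  unfolding P_def by measurable

lemma AE_P2: "AE \<alpha> in F. AE \<theta> in G. P \<theta> \<alpha>"
  using AE_P1 GF.AE_commute[OF P_sets] by simp

lemma AE_Hcont: "AE \<alpha> in F. \<alpha> \<in> A \<longrightarrow> isCont (H \<alpha>) (w \<bullet> \<alpha> / (1 + t))"
  using AE_P2
proof (rule eventually_mono)
  fix \<alpha> assume AEP: "AE \<theta> in G. P \<theta> \<alpha>"
  show "\<alpha> \<in> A \<longrightarrow> isCont (H \<alpha>) (w \<bullet> \<alpha> / (1 + t))"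
  proof
    assume aA: "\<alpha> \<in> A"
    define x where "x = w \<bullet> \<alpha> / (1 + t)"
    define f where "f \<theta> = fst \<theta> \<bullet> \<alpha> / (1 + \<mu>' \<theta>)" for \<theta>
    have fm: "f \<in> borel_measurable G" unfolding f_def by measurable
    have pos: "1 + \<mu> \<theta> > 0" if "\<theta> \<in> \<Theta>" for \<theta> using \<mu>_nonneg that by fastforce
    have Sm: "{\<theta> \<in> \<Theta>. f \<theta> = x} \<in> sets G" using fm by measurable
    have "AE \<theta> in G. \<theta> \<notin> {\<theta> \<in> \<Theta>. f \<theta> = x}"
      using AEP
    proof (rule eventually_mono)
      fix \<theta> assume "P \<theta> \<alpha>"
      show "\<theta> \<notin> {\<theta> \<in> \<Theta>. f \<theta> = x}"
      proof
        assume "\<theta> \<in> {\<theta> \<in> \<Theta>. f \<theta> = x}"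
        then have th: "\<theta> \<in> \<Theta>" and eq: "fst \<theta> \<bullet> \<alpha> / (1 + \<mu> \<theta>) = w \<bullet> \<alpha> / (1 + t)"
          by (auto simp: f_def x_def \<mu>'_def)
        have "(1+t) * (fst \<theta> \<bullet> \<alpha>) = (1 + \<mu> \<theta>) * (w \<bullet> \<alpha>)"
          using eq pos[OF th] t by (simp add: field_simps)
        then have "((1+t) *\<^sub>R fst \<theta> - (1 + \<mu>' \<theta>) *\<^sub>R w) \<bullet> \<alpha> = 0"
          using th by (simp add: \<mu>'_def inner_diff_left)
        then show False using \<open>P \<theta> \<alpha>\<close> th aA by (simp add: P_def)
      qed
    qed
    then have "emeasure G {\<theta> \<in> \<Theta>. f \<theta> = x} = 0"
      using AE_iff_measurable[OF Sm, of "\<lambda>\<theta>. \<theta> \<notin> {\<theta> \<in> \<Theta>. f \<theta> = x}"] by auto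
    then have "measure G {\<theta> \<in> \<Theta>. f \<theta> = x} = 0" by (simp add: measure_def)
    then have cL: "isCont (\<lambda>y. measure G {\<theta> \<in> \<Theta>. f \<theta> \<le> y}) x"
      using cdf_cont_iff[OF G_prob fm Theta_sets G_on_Theta] by simp
    have "L \<alpha> = (\<lambda>y. measure G {\<theta> \<in> \<Theta>. f \<theta> \<le> y})"
      unfolding lam_cdf_def f_def by (intro ext arg_cong[where f="measure G"]) (auto simp: \<mu>'_def)
    then have "isCont (L \<alpha>) x" using cL by simp
    then have "isCont (\<lambda>y. L \<alpha> y ^ (n - 1)) x" by (intro continuous_intros)
    then show "isCont (H \<alpha>) (w \<bullet> \<alpha> / (1 + t))" unfolding x_def Hfun_def[abs_def] by simp
  qed
qed

end


context setting begin

definition "gi \<alpha> y = integral {r' \<alpha>..y} (H \<alpha>)"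
definition "\<psi> \<alpha> s = indicator A \<alpha> * ((1+s) * gi \<alpha> (w \<bullet> \<alpha> / (1+s)))"
definition "d\<psi> \<alpha> = indicator A \<alpha> * (if w \<bullet> \<alpha> / (1+t) \<ge> r' \<alpha>
   then gi \<alpha> (w \<bullet> \<alpha> / (1+t)) - w \<bullet> \<alpha> / (1+t) * H \<alpha> (w \<bullet> \<alpha> / (1+t)) else 0)"

lemma r'_pos: "0 < r' \<alpha>" using r_pos by (auto simp: r'_def)

lemma gi_J: "gi \<alpha> y = J \<alpha> y"
  unfolding gi_def J_def gi_eq_J ..

lemma gi_meas: "(\<lambda>\<alpha>. gi \<alpha> (w \<bullet> \<alpha> / (1 + s))) \<in> borel_measurable F"
  unfolding gi_J by (rule J_meas)

lemma psi_meas: "(\<lambda>\<alpha>. \<psi> \<alpha> s) \<in> borel_measurable F"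
  unfolding \<psi>_def using gi_meas by measurable

lemma H_x_meas: "(\<lambda>\<alpha>. H \<alpha> (w \<bullet> \<alpha> / (1 + t))) \<in> borel_measurable F"
proof -
  have "(\<lambda>\<alpha>. (\<alpha>, w \<bullet> \<alpha> / (1 + t))) \<in> measurable F (F \<Otimes>\<^sub>M lborel)" by measurable
  from measurable_compose[OF this Hm] show ?thesis by simp
qed

lemma dpsi_meas: "d\<psi> \<in> borel_measurable F"
  unfolding d\<psi>_def[abs_def] using gi_meas[of t] H_x_meas by measurable

lemma psi_bound: "-1/2 < s \<Longrightarrow> \<bar>\<psi> \<alpha> s\<bar> \<le> \<omega>"
proof (cases "\<alpha> \<in> A")
  case True
  assume s: "-1/2 < s"
  have "\<bar>gi \<alpha> (w \<bullet> \<alpha> / (1+s))\<bar> \<le> \<bar>w \<bullet> \<alpha> / (1+s)\<bar>"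
    unfolding gi_def using H_nonneg H_le1 H_mono r'_pos by (intro gi_bound) (auto intro: less_imp_le)
  then have "(1+s) * \<bar>gi \<alpha> (w \<bullet> \<alpha> / (1+s))\<bar> \<le> (1+s) * \<bar>w \<bullet> \<alpha> / (1+s)\<bar>"
    using s by (intro mult_left_mono) auto
  also have "\<dots> = w \<bullet> \<alpha>" using s w_pos[OF True] by (simp add: abs_divide)
  also have "\<dots> \<le> \<omega>" using w_le[OF True] .
  finally show ?thesis using True s by (simp add: \<psi>_def abs_mult)
next
  case False then show ?thesis using \<omega>(1) by (simp add: \<psi>_def)
qed

lemma psi_integrable: "-1/2 < s \<Longrightarrow> integrable F (\<lambda>\<alpha>. \<psi> \<alpha> s)"
  by (rule Bochner_Integration.integrable_bound[where f="\<lambda>_. \<omega>"])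
     (use psi_meas psi_bound \<omega>(1) in auto)

lemma psi_lip': "-1/2 < s1 \<Longrightarrow> -1/2 < s2 \<Longrightarrow> \<bar>\<psi> \<alpha> s1 - \<psi> \<alpha> s2\<bar> \<le> 4*\<omega>*\<bar>s1 - s2\<bar>"
proof (cases "\<alpha> \<in> A")
  case True
  assume s: "-1/2 < s1" "-1/2 < s2"
  have "\<bar>\<psi> \<alpha> s1 - \<psi> \<alpha> s2\<bar> \<le> 4*(w \<bullet> \<alpha>)*\<bar>s1 - s2\<bar>"
    unfolding \<psi>_def gi_def using True
    by (simp, intro psi_lip) (use H_nonneg H_le1 H_mono r'_pos w_pos s in \<open>auto intro: less_imp_le\<close>)
  also have "\<dots> \<le> 4*\<omega>*\<bar>s1 - s2\<bar>" using w_le[OF True] by (intro mult_right_mono) auto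
  finally show ?thesis .
next
  case False then show ?thesis using \<omega>(1) by (simp add: \<psi>_def)
qed

lemma psi_deriv_pt:
  assumes "\<alpha> \<in> A \<longrightarrow> w \<bullet> \<alpha> / r \<alpha> \<noteq> 1 + t" "\<alpha> \<in> A \<longrightarrow> isCont (H \<alpha>) (w \<bullet> \<alpha> / (1 + t))"
  shows "((\<lambda>s. \<psi> \<alpha> s) has_real_derivative d\<psi> \<alpha>) (at t)"
proof (cases "\<alpha> \<in> A")
  case True
  have tp: "0 < 1 + t" using t by simp
  have rr: "r' \<alpha> = r \<alpha>" using True by (simp add: r'_def)
  have "w \<bullet> \<alpha> / (1+t) \<noteq> r' \<alpha>"
  proof
    assume "w \<bullet> \<alpha> / (1+t) = r' \<alpha>"
    then have "w \<bullet> \<alpha> / r \<alpha> = 1 + t" using tp r_pos True rr by (auto simp: field_simps)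
    then show False using assms True by simp
  qed
  then have cond: "w \<bullet> \<alpha> / (1+t) < r' \<alpha> \<or> (r' \<alpha> < w \<bullet> \<alpha> / (1+t) \<and> isCont (H \<alpha>) (w \<bullet> \<alpha> / (1+t)))"
    using assms True by auto
  show ?thesis
    using psi_deriv[OF H_mono w_pos[OF True] tp cond] True
    unfolding \<psi>_def[abs_def] d\<psi>_def gi_def by simp
next
  case False
  then show ?thesis unfolding \<psi>_def[abs_def] d\<psi>_def by simp
qed

end


context setting begin

definition "\<Phi> s = (\<integral>\<alpha>. \<psi> \<alpha> s \<partial>F)"

lemma AE_deriv: "AE \<alpha> in F. ((\<lambda>s. \<psi> \<alpha> s) has_real_derivative d\<psi> \<alpha>) (at t)"
proof (rule eventually_mono[OF eventually_conj[OF AE_not_kink AE_Hcont]])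
  fix \<alpha> assume "(\<alpha> \<in> A \<longrightarrow> w \<bullet> \<alpha> / r \<alpha> \<noteq> 1 + t) \<and> (\<alpha> \<in> A \<longrightarrow> isCont (H \<alpha>) (w \<bullet> \<alpha> / (1 + t)))"
  then show "((\<lambda>s. \<psi> \<alpha> s) has_real_derivative d\<psi> \<alpha>) (at t)"
    by (elim conjE) (rule psi_deriv_pt)
qed

lemma Phi_deriv: "(\<Phi> has_real_derivative (\<integral>\<alpha>. d\<psi> \<alpha> \<partial>F)) (at t)"
proof -
  define \<delta> where "\<delta> = t + 1/2"
  have \<delta>: "0 < \<delta>" using t by (simp add: \<delta>_def)
  have "((\<lambda>y. (\<Phi> y - \<Phi> t) / (y - t)) \<longlongrightarrow> (\<integral>\<alpha>. d\<psi> \<alpha> \<partial>F)) (at t within ball t \<delta>)"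
    unfolding tendsto_at_iff_sequentially
  proof (intro allI impI)
    fix X :: "nat \<Rightarrow> real"
    assume X: "\<forall>i. X i \<in> ball t \<delta> - {t}" and Xt: "X \<longlonglongrightarrow> t"
    have Xgt: "-1/2 < X i" for i using X[rule_format, of i] by (auto simp: \<delta>_def dist_real_def)
    have Xne: "X i \<noteq> t" for i using X by auto
    define s where "s i \<alpha> = (\<psi> \<alpha> (X i) - \<psi> \<alpha> t) / (X i - t)" for i \<alpha>
    have eqi: "(\<Phi> (X i) - \<Phi> t) / (X i - t) = (\<integral>\<alpha>. s i \<alpha> \<partial>F)" for i
    proof -
      have "\<Phi> (X i) - \<Phi> t = (\<integral>\<alpha>. \<psi> \<alpha> (X i) - \<psi> \<alpha> t \<partial>F)"
        unfolding \<Phi>_def by (rule Bochner_Integration.integral_diff[symmetric])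
          (rule psi_integrable[OF Xgt], rule psi_integrable[OF t])
      then show ?thesis unfolding s_def by (simp only: integral_divide_zero)
    qed
    have lim: "(\<lambda>i. \<integral>\<alpha>. s i \<alpha> \<partial>F) \<longlonglongrightarrow> (\<integral>\<alpha>. d\<psi> \<alpha> \<partial>F)"
    proof (rule integral_dominated_convergence[where w="\<lambda>_. 4*\<omega>"])
      show "d\<psi> \<in> borel_measurable F" by (rule dpsi_meas)
      show "s i \<in> borel_measurable F" for i
        unfolding s_def[abs_def]
        by (intro borel_measurable_divide borel_measurable_diff psi_meas measurable_const) simp_all
      show "integrable F (\<lambda>_. 4*\<omega>)" by simp
      show "AE \<alpha> in F. (\<lambda>i. s i \<alpha>) \<longlonglongrightarrow> d\<psi> \<alpha>"
        using AE_deriv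
      proof (rule eventually_mono)
        fix \<alpha> assume "((\<lambda>s. \<psi> \<alpha> s) has_real_derivative d\<psi> \<alpha>) (at t)"
        then have T: "((\<lambda>y. (\<psi> \<alpha> y - \<psi> \<alpha> t) / (y - t)) \<longlongrightarrow> d\<psi> \<alpha>) (at t within UNIV)"
          by (rule has_field_derivative_iff[THEN iffD1])
        have "\<forall>i. X i \<in> UNIV - {t}" using Xne by auto
        then have "((\<lambda>y. (\<psi> \<alpha> y - \<psi> \<alpha> t) / (y - t)) \<circ> X) \<longlonglongrightarrow> d\<psi> \<alpha>"
          using T[unfolded tendsto_at_iff_sequentially] Xt by blast
        then show "(\<lambda>i. s i \<alpha>) \<longlonglongrightarrow> d\<psi> \<alpha>"
          unfolding s_def comp_def .
      qed
      show "AE \<alpha> in F. norm (s i \<alpha>) \<le> 4*\<omega>" for i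
      proof (rule AE_I2)
        fix \<alpha>
        have "\<bar>\<psi> \<alpha> (X i) - \<psi> \<alpha> t\<bar> \<le> 4*\<omega>*\<bar>X i - t\<bar>" using psi_lip'[OF Xgt[of i]] t by simp
        moreover have p: "0 < \<bar>X i - t\<bar>" using Xne[of i] by simp
        ultimately have "\<bar>\<psi> \<alpha> (X i) - \<psi> \<alpha> t\<bar> / \<bar>X i - t\<bar> \<le> 4*\<omega>"
          by (simp only: pos_divide_le_eq)
        then show "norm (s i \<alpha>) \<le> 4*\<omega>" unfolding s_def real_norm_def abs_divide .
      qed
    qed
    show "((\<lambda>y. (\<Phi> y - \<Phi> t) / (y - t)) \<circ> X) \<longlonglongrightarrow> (\<integral>\<alpha>. d\<psi> \<alpha> \<partial>F)"
      using lim unfolding comp_def eqi .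
  qed
  then have "((\<lambda>y. (\<Phi> y - \<Phi> t) / (y - t)) \<longlongrightarrow> (\<integral>\<alpha>. d\<psi> \<alpha> \<partial>F)) (at t)"
    using at_within_open[of t "ball t \<delta>"] \<delta> by simp
  then show ?thesis by (rule has_field_derivative_iff[THEN iffD2])
qed

end


context setting begin

lemma inner_eq: "indicator A \<alpha> *\<^sub>R (if w \<bullet> \<alpha> / (1 + s) \<ge> r \<alpha> then
           (LINT u:{r \<alpha>..w \<bullet> \<alpha> / (1 + s)}|lborel. H \<alpha> u) else 0)
   = indicator A \<alpha> * gi \<alpha> (w \<bullet> \<alpha> / (1 + s))"
proof (cases "\<alpha> \<in> A")
  case True
  then have rr: "r' \<alpha> = r \<alpha>" by (simp add: r'_def)
  show ?thesis
  proof (cases "w \<bullet> \<alpha> / (1 + s) \<ge> r \<alpha>")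
    case True
    then show ?thesis using \<open>\<alpha> \<in> A\<close>
      by (simp add: gi_def rr set_borel_integral_eq_integral(2)[OF H_set_integrable])
  next
    case False
    then show ?thesis using \<open>\<alpha> \<in> A\<close> by (simp add: gi_def rr)
  qed
next
  case False then show ?thesis by simp
qed

lemma q_eq: "q_fun n F A G U Bmin \<mu> r w B s = \<Phi> s + s * B"
proof -
  have "(\<integral>\<alpha>\<in>A. (if w \<bullet> \<alpha> / (1 + s) \<ge> r \<alpha> then
           (LINT u:{r \<alpha>..w \<bullet> \<alpha> / (1 + s)}|lborel. H \<alpha> u) else 0) \<partial>F)
     = (\<integral>\<alpha>. indicator A \<alpha> * gi \<alpha> (w \<bullet> \<alpha> / (1 + s)) \<partial>F)"
    unfolding set_lebesgue_integral_def[of F A] by (intro Bochner_Integration.integral_cong refl inner_eq)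
  then have "q_fun n F A G U Bmin \<mu> r w B s = (1+s) * (\<integral>\<alpha>. indicator A \<alpha> * gi \<alpha> (w \<bullet> \<alpha> / (1 + s)) \<partial>F) + s * B"
    unfolding q_fun_def by simp
  also have "(1+s) * (\<integral>\<alpha>. indicator A \<alpha> * gi \<alpha> (w \<bullet> \<alpha> / (1 + s)) \<partial>F) = \<Phi> s"
    unfolding \<Phi>_def \<psi>_def
    by (subst integral_mult_right_zero[symmetric]) (simp only: mult.left_commute)
  finally show ?thesis .
qed

lemma sigma_eq: "indicator A \<alpha> *\<^sub>R (if w \<bullet> \<alpha> / (1 + t) \<ge> r \<alpha> then
         sigma_fun n G U Bmin \<mu> r \<alpha> (w \<bullet> \<alpha> / (1 + t)) * H \<alpha> (w \<bullet> \<alpha> / (1 + t)) else 0)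
   = - d\<psi> \<alpha>"
proof (cases "\<alpha> \<in> A")
  case aA: True
  then have rr: "r' \<alpha> = r \<alpha>" by (simp add: r'_def)
  define x where "x = w \<bullet> \<alpha> / (1 + t)"
  show ?thesis
  proof (cases "x \<ge> r \<alpha>")
    case xr: True
    have gi: "gi \<alpha> x = (LINT u:{r \<alpha>..x}|lborel. H \<alpha> u)"
      by (simp add: gi_def rr set_borel_integral_eq_integral(2)[OF H_set_integrable])
    have "sigma_fun n G U Bmin \<mu> r \<alpha> x * H \<alpha> x = x * H \<alpha> x - gi \<alpha> x"
    proof (cases "H \<alpha> x > 0")
      case True
      then show ?thesis using xr unfolding sigma_fun_def gi by (simp add: field_simps)
    next
      case False
      then have H0: "H \<alpha> x = 0" using H_nonneg[of \<alpha> x] by simp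
      have "H \<alpha> u = 0" if "u \<in> {r \<alpha>..x}" for u
      proof -
        have "H \<alpha> u \<le> H \<alpha> x" using H_mono[of \<alpha>] that by (auto simp: mono_def)
        then show ?thesis using H_nonneg[of \<alpha> u] H0 by linarith
      qed
      then have "gi \<alpha> x = integral {r \<alpha>..x} (\<lambda>_. 0::real)"
        unfolding gi_def rr by (intro integral_cong) auto
      then show ?thesis using False H0 xr unfolding sigma_fun_def by simp
    qed
    then show ?thesis using aA xr unfolding d\<psi>_def rr x_def[symmetric] by simp
  next
    case False
    then show ?thesis using aA unfolding d\<psi>_def rr x_def[symmetric] by simp
  qed
next
  case False then show ?thesis by (simp add: d\<psi>_def)
qed

lemma main:
  "((\<lambda>t. q_fun n F A G U Bmin \<mu> r w B t) has_real_derivative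
           (B - (\<integral>\<alpha>\<in>A.
              (if (w \<bullet> \<alpha>) / (1 + t) \<ge> r \<alpha> then
                 sigma_fun n G U Bmin \<mu> r \<alpha> ((w \<bullet> \<alpha>) / (1 + t))
                 * Hfun n G U Bmin \<mu> \<alpha> ((w \<bullet> \<alpha>) / (1 + t))
               else 0) \<partial>F))) (at t)"
proof -
  have e1: "(\<lambda>s. q_fun n F A G U Bmin \<mu> r w B s) = (\<lambda>s. \<Phi> s + s * B)"
    using q_eq by (intro ext)
  have e2: "B - (\<integral>\<alpha>\<in>A.
              (if (w \<bullet> \<alpha>) / (1 + t) \<ge> r \<alpha> then
                 sigma_fun n G U Bmin \<mu> r \<alpha> ((w \<bullet> \<alpha>) / (1 + t))
                 * Hfun n G U Bmin \<mu> \<alpha> ((w \<bullet> \<alpha>) / (1 + t))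
               else 0) \<partial>F) = (\<integral>\<alpha>. d\<psi> \<alpha> \<partial>F) + 1 * B"
    unfolding set_lebesgue_integral_def[of F A] sigma_eq by simp
  have "((\<lambda>s. \<Phi> s + s * B) has_real_derivative (\<integral>\<alpha>. d\<psi> \<alpha> \<partial>F) + 1 * B) (at t)"
    by (intro DERIV_add Phi_deriv DERIV_cmult_right DERIV_ident)
  then show ?thesis unfolding e1 e2 .
qed

end

theorem mainTheorem13:
  fixes n :: nat and U Bmin \<omega> :: real
    and A :: "(real^'d) set" and F :: "(real^'d) measure" and fF :: "real^'d \<Rightarrow> ennreal"
    and G :: "((real^'d) \<times> real) measure" and gG :: "(real^'d) \<times> real \<Rightarrow> ennreal"
    and r :: "real^'d \<Rightarrow> real" and \<mu> :: "(real^'d) \<times> real \<Rightarrow> real"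
    and w :: "real^'d" and B t :: real
  assumes n: "n \<ge> 2" and d: "CARD('d) \<ge> 2"
    and U: "U > 0" and Bmin: "Bmin > 0"
    and A_meas: "A \<in> sets lebesgue"
    and A_pos: "\<forall>\<alpha>\<in>A. \<forall>i. \<alpha> $ i > 0"
    and F_dens: "fF \<in> borel_measurable lebesgue" "F = density lebesgue fF"
    and F_prob: "prob_space F" and F_on_A: "AE \<alpha> in F. \<alpha> \<in> A"
    and G_dens: "gG \<in> borel_measurable lebesgue" "G = density lebesgue gG"
    and G_prob: "prob_space G" and G_on_Theta: "AE \<theta> in G. \<theta> \<in> Theta U Bmin"
    and \<omega>: "\<omega> > 0" "\<forall>w'\<in>{w'. \<forall>i. 0 < w' $ i \<and> w' $ i < U}. \<forall>\<alpha>\<in>A. w' \<bullet> \<alpha> \<le> \<omega>"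
    and r_meas: "r \<in> borel_measurable (restrict_space lebesgue A)"
    and r_pos: "\<forall>\<alpha>\<in>A. r \<alpha> > 0"
    and \<mu>_meas: "\<mu> \<in> borel_measurable (restrict_space lebesgue (Theta U Bmin))"
    and \<mu>_nonneg: "\<forall>\<theta>\<in>Theta U Bmin. \<mu> \<theta> \<ge> 0"
    and wB: "(w, B) \<in> Theta' F A r U Bmin"
    and t: "t > -1/2"
  shows "((\<lambda>t. q_fun n F A G U Bmin \<mu> r w B t) has_real_derivative
           (B - (\<integral>\<alpha>\<in>A.
              (if (w \<bullet> \<alpha>) / (1 + t) \<ge> r \<alpha> then
                 sigma_fun n G U Bmin \<mu> r \<alpha> ((w \<bullet> \<alpha>) / (1 + t))
                 * Hfun n G U Bmin \<mu> \<alpha> ((w \<bullet> \<alpha>) / (1 + t))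
               else 0) \<partial>F))) (at t)"
  proof -
  interpret setting n U Bmin \<omega> A F fF G gG r \<mu> w B t
    by (rule setting.intro[OF assms])
  show ?thesis by (rule main)
qed


end
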